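(* Let $A$ be a finitely generated algebra over $B=\bigoplus_{s=1}^K\Bbbk e_s$, $\alpha\in\mathbb N^K$, $N=\sum_s\alpha_s$, $R=\mathcal O(\operatorname{Rep}(A,\alpha))$, and $Q\in(D_BA)_3$ with associated differential triple bracket $\{\!\{-,-,-\}\!\}_Q$. Then for all $a,b,c\in A$ and $1\le i,j,k,l,u,v\le N$, $$\operatorname{tr}\mathcal X(Q)(a_{ij},b_{kl},c_{uv})=(\{\!\{a,b,c\}\!\}_Q)_{uj,il,kv}-(\{\!\{a,c,b\}\!\}_Q)_{kj,iv,ul},$$ where for $x=x'\otimes x''\otimes x'''\in A^{\otimes3}$ we write $x_{pq,rs,yz}=x'_{pq}x''_{rs}x'''_{yz}$ (extended linearly).
   Context: $\Bbbk$ field of characteristic $0$, $\otimes=\otimes_\Bbbk$, $(e_s)$ complete orthogonal idempotents. $R$ is the commutative $\Bbbk$-algebra generated by $a_{ij}$ ($a\in A$, $1\le i,j\le N$) with $(a+b)_{ij}=a_{ij}+b_{ij}$, $(ab)_{ij}=\sum_ka_{ik}b_{kj}$, and $(e_s)_{ij}=\delta_{ij}$ if $\alpha_1+\cdots+\alpha_{s-1}<i,j\le\alpha_1+\cdots+\alpha_s$, $0$ otherwise. $D_{A/B}=\operatorname{Der}_B(A,A\otimes A)$ (outer structure $x(d'\otimes d'')y=xd'\otimes d''y$) with bimodule structure $(b\delta c)(a)=\delta(a)'c\otimes b\delta(a)''$; $D_BA=T_AD_{A/B}$. For $\delta\in D_{A/B}$, $\delta_{ij}\in\operatorname{Der}(R)$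 with $\delta_{ij}(b_{kl})=\delta(b)'_{kj}\delta(b)''_{il}$; for $Q=\delta_1\delta_2\delta_3$, $\mathcal X(Q)=\mathcal X(\delta_1)\mathcal X(\delta_2)\mathcal X(\delta_3)$ as matrices with entries in $\bigwedge^3_R\operatorname{Der}(R)$, $\operatorname{tr}\mathcal X(Q)=\sum_i\mathcal X(Q)_{ii}$, extended linearly; $(\xi_1\wedge\xi_2\wedge\xi_3)(f_1,f_2,f_3)=\sum_{\sigma\in S_3}\epsilon(\sigma)\xi_1(f_{\sigma(1)})\xi_2(f_{\sigma(2)})\xi_3(f_{\sigma(3)})$. With $\tau=\tau_{(123)}$, $\tau(x_1\otimes x_2\otimes x_3)=x_3\otimes x_1\otimes x_2$, $\{\!\{-,-,-\}\!\}_Q=\sum_{i=0}^{2}\tau^i\circ\widetilde{\{\!\{\}\!\}}_Q\circ\tau^{-i}$ with $\widetilde{\{\!\{a_1,a_2,a_3\}\!\}}_Q=\delta_3(a_3)'\delta_1(a_1)''\otimes\delta_1(a_1)'\delta_2(a_2)''\otimes\delta_2(a_2)'\delta_3(a_3)''$, extended linearly in $Q$ ($\tau^{-i}$ acting on the argument triple by the same cyclic permutation). *)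

theory Defs
  imports Complex_Main "HOL-Library.Poly_Mapping" "HOL-Combinatorics.Permutations"
begin

definition kalg :: "('k::field \<Rightarrow> 'a::ring_1 \<Rightarrow> 'a) \<Rightarrow> bool" where
  "kalg smult \<longleftrightarrow> vector_space smult \<and>
     (\<forall>c x y. smult c (x * y) = smult c x * y \<and> smult c (x * y) = x * smult c y)"

inductive_set alg_gen :: "('k \<Rightarrow> 'a::ring_1 \<Rightarrow> 'a) \<Rightarrow> 'a set \<Rightarrow> 'a set"
  for smult S where
  gen: "x \<in> S \<Longrightarrow> x \<in> alg_gen smult S"
| one: "1 \<in> alg_gen smult S"
| add: "x \<in> alg_gen smult S \<Longrightarrow> y \<in> alg_gen smult S \<Longrightarrow> x + y \<in> alg_gen smult S"
| mult: "x \<in> alg_gen smult S \<Longrightarrow> y \<in> alg_gen smult S \<Longrightarrow> x * y \<in> alg_gen smult S"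
| smult: "x \<in> alg_gen smult S \<Longrightarrow> smult c x \<in> alg_gen smult S"

text \<open>e 1, ..., e K is a complete family of nonzero orthogonal idempotents, so that
B = span (e 1 .. e K) is the subalgebra (direct sum of K copies of k).\<close>
definition idem_family :: "(nat \<Rightarrow> 'a::ring_1) \<Rightarrow> nat \<Rightarrow> bool" where
  "idem_family e K \<longleftrightarrow>
     (\<forall>s\<in>{1..K}. \<forall>t\<in>{1..K}. e s * e t = (if s = t then e s else 0)) \<and>
     (\<Sum>s=1..K. e s) = 1 \<and> (\<forall>s\<in>{1..K}. e s \<noteq> 0)"

definition fin_gen_over_B :: "('k \<Rightarrow> 'a::ring_1 \<Rightarrow> 'a) \<Rightarrow> (nat \<Rightarrow> 'a) \<Rightarrow> nat \<Rightarrow> bool" where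
  "fin_gen_over_B smult e K \<longleftrightarrow> (\<exists>S. finite S \<and> alg_gen smult (S \<union> e ` {1..K}) = UNIV)"

text \<open>An element of A \<otimes> A is represented by a finite formal sum (a list) of elementary
tensors x' \<otimes> x''. Two representatives denote the same tensor iff they agree under all
pairs of k-linear functionals (for vector spaces over a field, A \<otimes> A embeds into the
space of bilinear forms on the dual).\<close>
definition teq :: "('k::field \<Rightarrow> 'a::ab_group_add \<Rightarrow> 'a) \<Rightarrow> ('a \<times> 'a) list \<Rightarrow> ('a \<times> 'a) list \<Rightarrow> bool" where
  "teq smult x y \<longleftrightarrow>
     (\<forall>f g. Vector_Spaces.linear smult (*) f \<longrightarrow> Vector_Spaces.linear smult (*) g \<longrightarrow>
        (\<Sum>(p, q)\<leftarrow>x. f p * g q) = (\<Sum>(p, q)\<leftarrow>y. f p * g q))"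

text \<open>Double derivations: D_{A/B} = Der_B(A, A \<otimes> A) with the outer bimodule structure
  x (d' \<otimes> d'') y = x d' \<otimes> d'' y.\<close>
definition dder :: "('k::field \<Rightarrow> 'a::ring_1 \<Rightarrow> 'a) \<Rightarrow> (nat \<Rightarrow> 'a) \<Rightarrow> nat
    \<Rightarrow> ('a \<Rightarrow> ('a \<times> 'a) list) \<Rightarrow> bool" where
  "dder smult e K \<delta> \<longleftrightarrow>
     (\<forall>x y. teq smult (\<delta> (x + y)) (\<delta> x @ \<delta> y)) \<and>
     (\<forall>c x. teq smult (\<delta> (smult c x)) (map (\<lambda>(p, q). (smult c p, q)) (\<delta> x))) \<and>
     (\<forall>x y. teq smult (\<delta> (x * y))
        (map (\<lambda>(p, q). (p, q * y)) (\<delta> x) @ map (\<lambda>(p, q). (x * p, q)) (\<delta> y))) \<and>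
     (\<forall>s\<in>{1..K}. teq smult (\<delta> (e s)) [])"

text \<open>R is the quotient of the polynomial ring over k in the variables X(a,i,j)
(a \<in> A) by the ideal rep_ideal; equality in R is congruence modulo rep_ideal.
Variables with indices outside 1..N are set to zero.\<close>

type_synonym ('a, 'k) rpoly = "(('a \<times> nat \<times> nat) \<Rightarrow>\<^sub>0 nat) \<Rightarrow>\<^sub>0 'k"

definition Xv :: "'a \<Rightarrow> nat \<Rightarrow> nat \<Rightarrow> ('a, 'k::comm_ring_1) rpoly" where
  "Xv a i j = Poly_Mapping.single (Poly_Mapping.single (a, i, j) 1) 1"

definition Cst :: "'k::comm_ring_1 \<Rightarrow> ('a, 'k) rpoly" where
  "Cst c = Poly_Mapping.single 0 c"

definition ideal_gen :: "'r::comm_ring_1 set \<Rightarrow> 'r set" where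
  "ideal_gen G = {(\<Sum>g\<in>F. r g * g) | F r. finite F \<and> F \<subseteq> G}"

definition dimN :: "(nat \<Rightarrow> nat) \<Rightarrow> nat \<Rightarrow> nat" where
  "dimN \<alpha> K = (\<Sum>s=1..K. \<alpha> s)"

definition in_block :: "(nat \<Rightarrow> nat) \<Rightarrow> nat \<Rightarrow> nat \<Rightarrow> bool" where
  "in_block \<alpha> s i \<longleftrightarrow> (\<Sum>t=1..<s. \<alpha> t) < i \<and> i \<le> (\<Sum>t=1..s. \<alpha> t)"

definition rep_relations :: "('k::field \<Rightarrow> 'a::ring_1 \<Rightarrow> 'a) \<Rightarrow> (nat \<Rightarrow> 'a) \<Rightarrow> nat
    \<Rightarrow> (nat \<Rightarrow> nat) \<Rightarrow> ('a, 'k) rpoly set" where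
  "rep_relations smult e K \<alpha> =
     (let N = dimN \<alpha> K in
      {Xv (a + b) i j - Xv a i j - Xv b i j | a b i j. i \<in> {1..N} \<and> j \<in> {1..N}} \<union>
      {Xv (smult c a) i j - Cst c * Xv a i j | c a i j. i \<in> {1..N} \<and> j \<in> {1..N}} \<union>
      {Xv (a * b) i j - (\<Sum>m=1..N. Xv a i m * Xv b m j) | a b i j. i \<in> {1..N} \<and> j \<in> {1..N}} \<union>
      {Xv (e s) i j - (if i = j \<and> in_block \<alpha> s i \<and> in_block \<alpha> s j then 1 else 0) | s i j.
          s \<in> {1..K} \<and> i \<in> {1..N} \<and> j \<in> {1..N}} \<union>
      {Xv a i j | a i j. i \<notin> {1..N} \<or> j \<notin> {1..N}})"

definition rep_ideal :: "('k::field \<Rightarrow> 'a::ring_1 \<Rightarrow> 'a) \<Rightarrow> (nat \<Rightarrow> 'a) \<Rightarrow> nat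
    \<Rightarrow> (nat \<Rightarrow> nat) \<Rightarrow> ('a, 'k) rpoly set" where
  "rep_ideal smult e K \<alpha> = ideal_gen (rep_relations smult e K \<alpha>)"

definition coord2 :: "('a \<times> 'a) list \<Rightarrow> nat \<Rightarrow> nat \<Rightarrow> nat \<Rightarrow> nat \<Rightarrow> ('a, 'k::comm_ring_1) rpoly" where
  "coord2 x p q r s = (\<Sum>(x1, x2)\<leftarrow>x. Xv x1 p q * Xv x2 r s)"

definition coord3 :: "('a \<times> 'a \<times> 'a) list \<Rightarrow> nat \<Rightarrow> nat \<Rightarrow> nat \<Rightarrow> nat \<Rightarrow> nat \<Rightarrow> nat
    \<Rightarrow> ('a, 'k::comm_ring_1) rpoly" where
  "coord3 x p q r s y z = (\<Sum>(x1, x2, x3)\<leftarrow>x. Xv x1 p q * Xv x2 r s * Xv x3 y z)"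

text \<open>Value of the derivation delta_{ij} of R on the generator b_{kl}:
  delta_{ij}(b_{kl}) = delta(b)'_{kj} delta(b)''_{il}.\<close>
definition dij_gen :: "('a \<Rightarrow> ('a \<times> 'a) list) \<Rightarrow> nat \<Rightarrow> nat \<Rightarrow> 'a \<times> nat \<times> nat
    \<Rightarrow> ('a, 'k::comm_ring_1) rpoly" where
  "dij_gen \<delta> i j f = (case f of (b, k, l) \<Rightarrow> coord2 (\<delta> b) k j i l)"

definition wedge3_eval :: "('g \<Rightarrow> 'r::comm_ring_1) \<Rightarrow> ('g \<Rightarrow> 'r) \<Rightarrow> ('g \<Rightarrow> 'r)
    \<Rightarrow> 'g \<Rightarrow> 'g \<Rightarrow> 'g \<Rightarrow> 'r" where
  "wedge3_eval \<xi>1 \<xi>2 \<xi>3 f1 f2 f3 =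
     (\<Sum>\<sigma>\<in>{\<sigma>. \<sigma> permutes {0::nat,1,2}}.
        of_int (sign \<sigma>) * \<xi>1 ([f1, f2, f3] ! \<sigma> 0) * \<xi>2 ([f1, f2, f3] ! \<sigma> 1)
          * \<xi>3 ([f1, f2, f3] ! \<sigma> 2))"

text \<open>Q \<in> (D_B A)_3 given as a formal sum of products delta1 delta2 delta3;
 tr X(Q)(f1,f2,f3) = sum_i (X(d1) X(d2) X(d3))_{ii}(f1,f2,f3), extended linearly.\<close>
definition trX_eval :: "(nat \<Rightarrow> nat) \<Rightarrow> nat
    \<Rightarrow> (('a \<Rightarrow> ('a \<times> 'a) list) \<times> ('a \<Rightarrow> ('a \<times> 'a) list) \<times> ('a \<Rightarrow> ('a \<times> 'a) list)) list
    \<Rightarrow> 'a \<times> nat \<times> nat \<Rightarrow> 'a \<times> nat \<times> nat \<Rightarrow> 'a \<times> nat \<times> nat \<Rightarrow> ('a, 'k::comm_ring_1) rpoly" where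
  "trX_eval \<alpha> K Q f1 f2 f3 =
     (\<Sum>(d1, d2, d3)\<leftarrow>Q. \<Sum>i\<in>{1..dimN \<alpha> K}. \<Sum>m\<in>{1..dimN \<alpha> K}. \<Sum>n\<in>{1..dimN \<alpha> K}.
        wedge3_eval (dij_gen d1 i m) (dij_gen d2 m n) (dij_gen d3 n i) f1 f2 f3)"

definition tau3 :: "'a \<times> 'a \<times> 'a \<Rightarrow> 'a \<times> 'a \<times> 'a" where
  "tau3 x = (case x of (x1, x2, x3) \<Rightarrow> (x3, x1, x2))"

definition bracket_tilde :: "('a \<Rightarrow> ('a \<times> 'a) list) \<Rightarrow> ('a \<Rightarrow> ('a \<times> 'a) list)
    \<Rightarrow> ('a \<Rightarrow> ('a \<times> 'a) list) \<Rightarrow> 'a::ring_1 \<Rightarrow> 'a \<Rightarrow> 'a \<Rightarrow> ('a \<times> 'a \<times> 'a) list" where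
  "bracket_tilde d1 d2 d3 a1 a2 a3 =
     [(r1 * p2, p1 * q2, q1 * r2). (p1, p2) \<leftarrow> d1 a1, (q1, q2) \<leftarrow> d2 a2, (r1, r2) \<leftarrow> d3 a3]"

text \<open>sum_{i=0}^2 tau^i o tilde o tau^{-i}, where tau^{-1}(a1,a2,a3) = (a2,a3,a1).\<close>
definition bracketQ :: "(('a \<Rightarrow> ('a \<times> 'a) list) \<times> ('a \<Rightarrow> ('a \<times> 'a) list) \<times> ('a \<Rightarrow> ('a \<times> 'a) list)) list
    \<Rightarrow> 'a::ring_1 \<Rightarrow> 'a \<Rightarrow> 'a \<Rightarrow> ('a \<times> 'a \<times> 'a) list" where
  "bracketQ Q a1 a2 a3 = concat (map (\<lambda>(d1, d2, d3).
      bracket_tilde d1 d2 d3 a1 a2 a3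
      @ map tau3 (bracket_tilde d1 d2 d3 a2 a3 a1)
      @ map (tau3 \<circ> tau3) (bracket_tilde d1 d2 d3 a3 a1 a2)) Q)"

end

theory Submission
  imports Defs
begin

lemma st: "sum f {p. p permutes {0::nat,1,2}} = 
     (\<Sum>b\<in>{0,1,2}. \<Sum>c\<in>{1,2}. \<Sum>d\<in>{2}. f (transpose 0 b \<circ> (transpose 1 c \<circ> (transpose 2 d \<circ> id))))"
proof -
  have "sum f {p. p permutes insert 0 (insert 1 (insert (2::nat) {}))} = 
     (\<Sum>b\<in>{0,1,2}. \<Sum>c\<in>{1,2}. \<Sum>d\<in>{2}. f (transpose 0 b \<circ> (transpose 1 c \<circ> (transpose 2 d \<circ> id))))"
    apply (subst sum_over_permutations_insert)
      apply simp
     apply simp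
    apply (subst sum_over_permutations_insert)
      apply simp
     apply simp
    apply (subst sum_over_permutations_insert)
      apply simp
     apply simp
    apply (simp only: permutes_empty)
    apply simp
    done
  then show ?thesis by simp
qed

lemma sgn3: "sign (transpose (a::nat) b \<circ> (transpose c d \<circ> (transpose g h \<circ> id))) =
     (if a = b then 1 else -1) * (if c = d then 1 else -1) * (if g = h then 1 else (-1::int))"
    by (simp add: sign_compose permutation_swap_id permutation_compose sign_swap_id)
lemma wedge3_expand:
  "wedge3_eval x1 x2 x3 f1 f2 f3 =
     x1 f1 * x2 f2 * x3 f3 - x1 f1 * x2 f3 * x3 f2 - x1 f2 * x2 f1 * x3 f3
   + x1 f2 * x2 f3 * x3 f1 + x1 f3 * x2 f1 * x3 f2 - x1 f3 * x2 f2 * x3 f1"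
proof -
  have L: "(\<Sum>b\<in>{0::nat,1,2}. \<Sum>c\<in>{1::nat,2}. \<Sum>d\<in>{2::nat}. F b c d) = F 0 1 2 + F 0 2 2 + F 1 1 2 + F 1 2 2 + F 2 1 2 + F 2 2 2" for F :: "nat \<Rightarrow> nat \<Rightarrow> nat \<Rightarrow> 'z::comm_monoid_add"
    by (simp add: add.assoc)
  show ?thesis
    unfolding wedge3_eval_def st L
    apply (simp only: sgn3)
    apply (simp add: transpose_def algebra_simps)
    done
qed


lemma ig_iff: "x \<in> ideal_gen G \<longleftrightarrow> (\<exists>F r. finite F \<and> F \<subseteq> G \<and> x = (\<Sum>g\<in>F. r g * g))"
  unfolding ideal_gen_def by blast

lemma sum_list_concat_map: "sum_list (map f (concat xss)) = sum_list (map (\<lambda>xs. sum_list (map f xs)) xss)"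
  by (induction xss) auto

lemma ig_0: "0 \<in> ideal_gen G"
  unfolding ig_iff by (intro exI[of _ "{}"] exI[of _ "\<lambda>_. 0"]) simp

lemma ig_gen: "g \<in> G \<Longrightarrow> g \<in> ideal_gen G"
  unfolding ig_iff by (intro exI[of _ "{g}"] exI[of _ "\<lambda>_. 1"]) simp

lemma ig_mult: "x \<in> ideal_gen G \<Longrightarrow> c * x \<in> ideal_gen G"
proof -
  assume "x \<in> ideal_gen G"
  then obtain F r where F: "finite F" "F \<subseteq> G" "x = (\<Sum>g\<in>F. r g * g)"
    unfolding ideal_gen_def by blast
  have "c * x = (\<Sum>g\<in>F. (c * r g) * g)" using F(3) by (simp add: sum_distrib_left mult.assoc)
  then show ?thesis using F unfolding ig_iff by (intro exI[of _ F] exI[of _ "\<lambda>g. c * r g"]) simp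
qed

lemma ig_add: "x \<in> ideal_gen G \<Longrightarrow> y \<in> ideal_gen G \<Longrightarrow> x + y \<in> ideal_gen G"
proof -
  assume "x \<in> ideal_gen G" "y \<in> ideal_gen G"
  then obtain F r F2 r2 where F: "finite F" "F \<subseteq> G" "x = (\<Sum>g\<in>F. r g * g)"
    and F2: "finite F2" "F2 \<subseteq> G" "y = (\<Sum>g\<in>F2. r2 g * g)"
    unfolding ideal_gen_def by blast
  define s where "s g = (if g \<in> F then r g else 0) + (if g \<in> F2 then r2 g else 0)" for g
  have a: "(\<Sum>g\<in>F \<union> F2. (if g \<in> F then r g else 0) * g) = (\<Sum>g\<in>F. r g * g)"
    by (rule sum.mono_neutral_cong_right) (use F F2 in auto)
  have b: "(\<Sum>g\<in>F \<union> F2. (if g \<in> F2 then r2 g else 0) * g) = (\<Sum>g\<in>F2. r2 g * g)"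
    by (rule sum.mono_neutral_cong_right) (use F F2 in auto)
  have "x + y = (\<Sum>g\<in>F \<union> F2. s g * g)"
    unfolding s_def distrib_right sum.distrib a b F(3) F2(3) ..
  moreover have "finite (F \<union> F2)" "F \<union> F2 \<subseteq> G" using F F2 by auto
  ultimately show ?thesis unfolding ig_iff by (intro exI[of _ "F \<union> F2"] exI[of _ s]) simp
qed

lemma ig_neg: "x \<in> ideal_gen G \<Longrightarrow> - x \<in> ideal_gen G"
  using ig_mult[of x G "-1"] by simp

lemma ig_diff: "x \<in> ideal_gen G \<Longrightarrow> y \<in> ideal_gen G \<Longrightarrow> x - y \<in> ideal_gen G"
proof -
  assume "x \<in> ideal_gen G" "y \<in> ideal_gen G"
  then have "x + - y \<in> ideal_gen G" by (intro ig_add ig_neg)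
  then show ?thesis by simp
qed

lemma ig_mult_r: "x \<in> ideal_gen G \<Longrightarrow> x * c \<in> ideal_gen G"
  using ig_mult[of x G c] by (simp only: mult.commute)

lemma ig_sum_list: "(\<And>x. x \<in> set xs \<Longrightarrow> f x \<in> ideal_gen G) \<Longrightarrow> sum_list (map f xs) \<in> ideal_gen G"
  by (induction xs) (auto intro: ig_0 ig_add)

lemma ig_prod3:
  assumes "A - A' \<in> ideal_gen G" "B - B' \<in> ideal_gen G" "C - C' \<in> ideal_gen G"
  shows "A * B * C - A' * B' * C' \<in> ideal_gen G"
proof -
  have "A * B * C - A' * B' * C' = (A - A') * (B * C) + (B - B') * (A' * C) + (C - C') * (A' * B')"
    by (simp add: algebra_simps)
  then show ?thesis using assms by (simp only:) (intro ig_add ig_mult_r)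
qed

lemma prod_rel:
  assumes "s \<in> {1..dimN \<alpha> K}" "t \<in> {1..dimN \<alpha> K}"
  shows "(\<Sum>m=1..dimN \<alpha> K. Xv x s m * Xv y m t) - Xv (x * y) s t \<in> rep_ideal smult e K \<alpha>"
proof -
  have "Xv (x * y) s t - (\<Sum>m=1..dimN \<alpha> K. Xv x s m * Xv y m t) \<in> rep_relations smult e K \<alpha>"
    unfolding rep_relations_def Let_def
    apply (rule UnI1, rule UnI1, rule UnI2)
    using assms by auto
  then have "- (Xv (x * y) s t - (\<Sum>m=1..dimN \<alpha> K. Xv x s m * Xv y m t)) \<in> rep_ideal smult e K \<alpha>"
    unfolding rep_ideal_def by (intro ig_neg ig_gen)
  then show ?thesis by (simp only: minus_diff_eq)
qed

lemma sum_list_sum_comm: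
  "(\<Sum>s\<in>S. sum_list (map (\<lambda>x. f x s) xs)) = sum_list (map (\<lambda>x. \<Sum>s\<in>S. f x s) xs)"
  by (induction xs) (simp_all add: sum.distrib)

lemma coord3_tilde:
  "coord3 (bracket_tilde d1 d2 d3 x y z) a b c d g h =
    (\<Sum>(p1,p2)\<leftarrow>d1 x. \<Sum>(q1,q2)\<leftarrow>d2 y. \<Sum>(r1,r2)\<leftarrow>d3 z.
       Xv (r1 * p2) a b * Xv (p1 * q2) c d * Xv (q1 * r2) g h)"
  unfolding coord3_def bracket_tilde_def
  by (simp add: sum_list_concat_map o_def case_prod_unfold)



lemma prod3_sum_list:
  fixes f :: "'x \<Rightarrow> 'r::semiring_0"
  shows "sum_list (map f A) * sum_list (map g B) * sum_list (map h C) =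
   sum_list (map (\<lambda>a. sum_list (map (\<lambda>b. sum_list (map (\<lambda>c. f a * g b * h c) C)) B)) A)"
  by (simp add: sum_list_const_mult sum_list_mult_const)

lemma triple:
  assumes "s1 \<in> {1..dimN \<alpha> K}" "t1 \<in> {1..dimN \<alpha> K}" "s2 \<in> {1..dimN \<alpha> K}"
    "t2 \<in> {1..dimN \<alpha> K}" "s3 \<in> {1..dimN \<alpha> K}" "t3 \<in> {1..dimN \<alpha> K}"
  shows "(\<Sum>p\<in>{1..dimN \<alpha> K}. \<Sum>m\<in>{1..dimN \<alpha> K}. \<Sum>n\<in>{1..dimN \<alpha> K}.
      dij_gen d1 p m (x, s1, t1) * dij_gen d2 m n (y, s2, t2) * dij_gen d3 n p (z, s3, t3))
    - coord3 (bracket_tilde d1 d2 d3 x y z) s3 t1 s1 t2 s2 t3 \<in> rep_ideal smult e K \<alpha>"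
proof -
  define S where "S = {1..dimN \<alpha> K}"
  have inner: "(\<Sum>p\<in>S. \<Sum>m\<in>S. \<Sum>n\<in>S. (Xv p1 s1 m * Xv p2 p t1) * (Xv q1 s2 n * Xv q2 m t2) * (Xv r1 s3 p * Xv r2 n t3))
     - Xv (r1 * p2) s3 t1 * Xv (p1 * q2) s1 t2 * Xv (q1 * r2) s2 t3 \<in> rep_ideal smult e K \<alpha>"
    for p1 p2 q1 q2 r1 r2 :: 'a
  proof -
    have eq: "(\<Sum>p\<in>S. \<Sum>m\<in>S. \<Sum>n\<in>S. (Xv p1 s1 m * Xv p2 p t1) * (Xv q1 s2 n * Xv q2 m t2) * (Xv r1 s3 p * Xv r2 n t3))
      = (\<Sum>p\<in>S. Xv r1 s3 p * Xv p2 p t1) * (\<Sum>m\<in>S. Xv p1 s1 m * Xv q2 m t2) * (\<Sum>n\<in>S. Xv q1 s2 n * Xv r2 n t3)"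
      by (simp add: sum_distrib_left sum_distrib_right mult_ac)
    show ?thesis unfolding eq unfolding rep_ideal_def S_def
      using prod_rel[OF assms(5) assms(2), of r1 p2 smult e] prod_rel[OF assms(1) assms(4), of p1 q2 smult e]
        prod_rel[OF assms(3) assms(6), of q1 r2 smult e]
      unfolding rep_ideal_def
      by (rule ig_prod3)
  qed
  have L: "(\<Sum>p\<in>S. \<Sum>m\<in>S. \<Sum>n\<in>S.
      dij_gen d1 p m (x, s1, t1) * dij_gen d2 m n (y, s2, t2) * dij_gen d3 n p (z, s3, t3))
     = (\<Sum>(p1,p2)\<leftarrow>d1 x. \<Sum>(q1,q2)\<leftarrow>d2 y. \<Sum>(r1,r2)\<leftarrow>d3 z.
         \<Sum>p\<in>S. \<Sum>m\<in>S. \<Sum>n\<in>S. (Xv p1 s1 m * Xv p2 p t1) * (Xv q1 s2 n * Xv q2 m t2) * (Xv r1 s3 p * Xv r2 n t3))"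
    unfolding dij_gen_def prod.case coord2_def
    apply (simp only: prod3_sum_list)
    apply (simp only: sum_list_sum_comm case_prod_unfold)
    done
  have "(\<Sum>p\<in>S. \<Sum>m\<in>S. \<Sum>n\<in>S.
      dij_gen d1 p m (x, s1, t1) * dij_gen d2 m n (y, s2, t2) * dij_gen d3 n p (z, s3, t3))
    - coord3 (bracket_tilde d1 d2 d3 x y z) s3 t1 s1 t2 s2 t3 =
    (\<Sum>(p1,p2)\<leftarrow>d1 x. \<Sum>(q1,q2)\<leftarrow>d2 y. \<Sum>(r1,r2)\<leftarrow>d3 z.
         (\<Sum>p\<in>S. \<Sum>m\<in>S. \<Sum>n\<in>S. (Xv p1 s1 m * Xv p2 p t1) * (Xv q1 s2 n * Xv q2 m t2) * (Xv r1 s3 p * Xv r2 n t3))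
         - Xv (r1 * p2) s3 t1 * Xv (p1 * q2) s1 t2 * Xv (q1 * r2) s2 t3)"
    unfolding L coord3_tilde by (simp only: sum_list_subtractf case_prod_unfold)
  also have "\<dots> \<in> rep_ideal smult e K \<alpha>"
    unfolding rep_ideal_def
    unfolding case_prod_unfold
    by (intro ig_sum_list inner[unfolded rep_ideal_def])
  finally show ?thesis unfolding S_def .
qed


lemma coord3_append: "coord3 (xs @ ys) a b c d g h = coord3 xs a b c d g h + coord3 ys a b c d g h"
  unfolding coord3_def by simp

lemma coord3_tau: "coord3 (map tau3 X) a b c d g h = coord3 X c d g h a b"
  unfolding coord3_def tau3_def by (simp add: case_prod_unfold o_def mult_ac)

lemma coord3_tau2: "coord3 (map (tau3 \<circ> tau3) X) a b c d g h = coord3 X g h a b c d"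
  unfolding coord3_def tau3_def by (simp add: case_prod_unfold o_def mult_ac)

lemma coord3_concat: "coord3 (concat (map F Q)) a b c d g h = sum_list (map (\<lambda>q. coord3 (F q) a b c d g h) Q)"
  unfolding coord3_def by (simp add: sum_list_concat_map o_def)

lemma perQ:
  fixes smult :: "'k::field \<Rightarrow> 'a::ring_1 \<Rightarrow> 'a"
  assumes "i \<in> {1..dimN \<alpha> K}" and "j \<in> {1..dimN \<alpha> K}" and "k \<in> {1..dimN \<alpha> K}"
    and "l \<in> {1..dimN \<alpha> K}" and "u \<in> {1..dimN \<alpha> K}" and "v \<in> {1..dimN \<alpha> K}"
  shows "(\<Sum>p\<in>{1..dimN \<alpha> K}. \<Sum>m\<in>{1..dimN \<alpha> K}. \<Sum>n\<in>{1..dimN \<alpha> K}.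
        wedge3_eval (dij_gen d1 p m) (dij_gen d2 m n) (dij_gen d3 n p) (a, i, j) (b, k, l) (c, u, v))
    - (coord3 (bracket_tilde d1 d2 d3 a b c @ map tau3 (bracket_tilde d1 d2 d3 b c a)
          @ map (tau3 \<circ> tau3) (bracket_tilde d1 d2 d3 c a b)) u j i l k v
       - coord3 (bracket_tilde d1 d2 d3 a c b @ map tau3 (bracket_tilde d1 d2 d3 c b a)
          @ map (tau3 \<circ> tau3) (bracket_tilde d1 d2 d3 b a c)) k j i v u l)
    \<in> rep_ideal smult e K \<alpha>"
proof -
  define S where "S = {1..dimN \<alpha> K}"
  define W where "W x s1 t1 y s2 t2 z s3 t3 = ((\<Sum>p\<in>S. \<Sum>m\<in>S. \<Sum>n\<in>S.
      dij_gen d1 p m (x, s1, t1) * dij_gen d2 m n (y, s2, t2) * dij_gen d3 n p (z, s3, t3))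
     :: ('a, 'k) rpoly)" for x s1 t1 y s2 t2 z s3 t3
  define C where "C x y z s1 t1 s2 t2 s3 t3 = (coord3 (bracket_tilde d1 d2 d3 x y z) s1 t1 s2 t2 s3 t3 :: ('a, 'k) rpoly)" for x y z s1 t1 s2 t2 s3 t3
  have T: "W x s1 t1 y s2 t2 z s3 t3 - C x y z s3 t1 s1 t2 s2 t3 \<in> rep_ideal smult e K \<alpha>"
    if "s1 \<in> S" "t1 \<in> S" "s2 \<in> S" "t2 \<in> S" "s3 \<in> S" "t3 \<in> S" for x s1 t1 y s2 t2 z s3 t3
    using triple[of s1 \<alpha> K t1 s2 t2 s3 t3 d1 x d2 y d3 z smult e] that
    unfolding W_def C_def S_def by simp
  have lhs: "(\<Sum>p\<in>S. \<Sum>m\<in>S. \<Sum>n\<in>S.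
        wedge3_eval (dij_gen d1 p m) (dij_gen d2 m n) (dij_gen d3 n p) (a, i, j) (b, k, l) (c, u, v))
     = W a i j b k l c u v - W a i j c u v b k l - W b k l a i j c u v
       + W b k l c u v a i j + W c u v a i j b k l - W c u v b k l a i j"
    unfolding wedge3_expand W_def
    by (simp only: sum.distrib sum_subtractf)
  have "(\<Sum>p\<in>S. \<Sum>m\<in>S. \<Sum>n\<in>S.
        wedge3_eval (dij_gen d1 p m) (dij_gen d2 m n) (dij_gen d3 n p) (a, i, j) (b, k, l) (c, u, v))
    - (coord3 (bracket_tilde d1 d2 d3 a b c @ map tau3 (bracket_tilde d1 d2 d3 b c a)
          @ map (tau3 \<circ> tau3) (bracket_tilde d1 d2 d3 c a b)) u j i l k v
       - coord3 (bracket_tilde d1 d2 d3 a c b @ map tau3 (bracket_tilde d1 d2 d3 c b a)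
          @ map (tau3 \<circ> tau3) (bracket_tilde d1 d2 d3 b a c)) k j i v u l)
    = (W a i j b k l c u v - C a b c u j i l k v) - (W a i j c u v b k l - C a c b k j i v u l)
      - (W b k l a i j c u v - C b a c u l k j i v) + (W b k l c u v a i j - C b c a i l k v u j)
      + (W c u v a i j b k l - C c a b k v u j i l) - (W c u v b k l a i j - C c b a i v u l k j)"
    unfolding lhs coord3_append coord3_tau coord3_tau2 C_def
    by (simp add: algebra_simps)
  also have "\<dots> \<in> rep_ideal smult e K \<alpha>"
    unfolding rep_ideal_def
    using assms unfolding S_def[symmetric]
    by (intro ig_add ig_diff T[unfolded rep_ideal_def])
  finally show ?thesis unfolding S_def .
qed


theorem lemma5p3:
  fixes smult :: "'k::field_char_0 \<Rightarrow> 'a::ring_1 \<Rightarrow> 'a"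
    and e :: "nat \<Rightarrow> 'a" and K :: nat and \<alpha> :: "nat \<Rightarrow> nat"
    and Q :: "(('a \<Rightarrow> ('a \<times> 'a) list) \<times> ('a \<Rightarrow> ('a \<times> 'a) list) \<times> ('a \<Rightarrow> ('a \<times> 'a) list)) list"
    and a b c :: 'a and i j k l u v :: nat
  assumes "kalg smult"
    and "idem_family e K"
    and "fin_gen_over_B smult e K"
    and "\<forall>(d1, d2, d3) \<in> set Q. dder smult e K d1 \<and> dder smult e K d2 \<and> dder smult e K d3"
    and "i \<in> {1..dimN \<alpha> K}" and "j \<in> {1..dimN \<alpha> K}" and "k \<in> {1..dimN \<alpha> K}"
    and "l \<in> {1..dimN \<alpha> K}" and "u \<in> {1..dimN \<alpha> K}" and "v \<in> {1..dimN \<alpha> K}"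
  shows "(trX_eval \<alpha> K Q (a, i, j) (b, k, l) (c, u, v) :: ('a, 'k) rpoly)
           - (coord3 (bracketQ Q a b c) u j i l k v - coord3 (bracketQ Q a c b) k j i v u l)
         \<in> rep_ideal smult e K \<alpha>"
proof -
  define E where "E q = ((case q of (d1, d2, d3) \<Rightarrow> (
    (\<Sum>p\<in>{1..dimN \<alpha> K}. \<Sum>m\<in>{1..dimN \<alpha> K}. \<Sum>n\<in>{1..dimN \<alpha> K}.
        wedge3_eval (dij_gen d1 p m) (dij_gen d2 m n) (dij_gen d3 n p) (a, i, j) (b, k, l) (c, u, v))
    - (coord3 (bracket_tilde d1 d2 d3 a b c @ map tau3 (bracket_tilde d1 d2 d3 b c a)
          @ map (tau3 \<circ> tau3) (bracket_tilde d1 d2 d3 c a b)) u j i l k v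
       - coord3 (bracket_tilde d1 d2 d3 a c b @ map tau3 (bracket_tilde d1 d2 d3 c b a)
          @ map (tau3 \<circ> tau3) (bracket_tilde d1 d2 d3 b a c)) k j i v u l))) :: ('a, 'k) rpoly)" for q
  have "(trX_eval \<alpha> K Q (a, i, j) (b, k, l) (c, u, v) :: ('a, 'k) rpoly)
           - (coord3 (bracketQ Q a b c) u j i l k v - coord3 (bracketQ Q a c b) k j i v u l)
        = sum_list (map E Q)"
    unfolding trX_eval_def bracketQ_def coord3_concat E_def
    by (simp add: sum_list_subtractf case_prod_unfold)
  also have "\<dots> \<in> rep_ideal smult e K \<alpha>"
    unfolding rep_ideal_def
  proof (rule ig_sum_list)
    fix q assume "q \<in> set Q"
    obtain d1 d2 d3 where q: "q = (d1, d2, d3)" by (cases q) auto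
    show "E q \<in> ideal_gen (rep_relations smult e K \<alpha>)"
      unfolding q E_def prod.case
      using perQ[OF assms(5-10), of d1 d2 d3 a b c smult e] unfolding rep_ideal_def .
  qed
  finally show ?thesis .
qed

end
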